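(* Every circuit $c$ of $\mathsf{ACirc}$ is equivalent (equal in AIH, equivalently having the same denotation) to a circuit containing precisely one occurrence of $\mathbf 1$ and no occurrence of $\mathbf 1^{op}$.
   Context: Fix a field $k$. Circuits: terms built from generators with sorts $(n,m)$: copier $\Delta:(1,2)$, discard $!:(1,0)$, amplifier $\mathsf{s}_r:(1,1)$ ($r\in k$), register $\mathsf{x}:(1,1)$, adder $+:(2,1)$, zero $0:(0,1)$, one $\mathbf{1}:(0,1)$; mirror images $\Delta^{op}:(2,1)$, $!^{op}:(0,1)$, $\mathsf{s}_r^{op}$, $\mathsf{x}^{op}:(1,1)$, $+^{op}:(1,2)$, $0^{op}:(1,0)$, $\mathbf{1}^{op}:(1,0)$; $\mathrm{id}_0:(0,0),\mathrm{id}_1:(1,1),\mathrm{sw}:(2,2)$; closed under $;$ and $\oplus$; $\mathsf{ACirc}$ is the resulting prop. Denotation over the field $k(x)$ of polynomial fractions: $[\![\Delta]\!]=\{(p,(p,p))\}$, $[\![!]\!]=\{(p,\bullet)\}$, $[\![+]\!]=\{((p,q),p+q)\}$, $[\![0]\!]=\{(\bullet,0)\}$, $[\![\mathbf 1]\!]=\{(\bullet,1)\}$, $[\![\mathsf s_r]\!]=\{(p,rp)\}$, $[\![\mathsf x]\!]=\{(p,px)\}$; mirrored generators denote converse relations; structural ones identity, swap, $\{(\bullet,\bullet)\}$; $;$ relational composition, $\oplus$ product. AIH is the equational theory of Affine Interacting Hopf Algebras, sound and complete for this semantics. *)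

theory Defs
  imports "HOL-Computational_Algebra.Polynomial" "HOL-Computational_Algebra.Fraction_Field"
begin

text \<open>Circuit terms of ACirc (generators, mirror images, structural generators,
  sequential composition Seq (;) and monoidal product Par (\<oplus>)).\<close>

datatype 'k circ =
    Copy | Disc | Amp 'k | Reg | Add | Zero | One
  | CopyOp | DiscOp | AmpOp 'k | RegOp | AddOp | ZeroOp | OneOp
  | Id0 | Id1 | Sw
  | Seq "'k circ" "'k circ"
  | Par "'k circ" "'k circ"

inductive has_sort :: "'k circ \<Rightarrow> nat \<Rightarrow> nat \<Rightarrow> bool" where
  "has_sort Copy 1 2"
| "has_sort Disc 1 0"
| "has_sort (Amp r) 1 1"
| "has_sort Reg 1 1"
| "has_sort Add 2 1"
| "has_sort Zero 0 1"
| "has_sort One 0 1"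
| "has_sort CopyOp 2 1"
| "has_sort DiscOp 0 1"
| "has_sort (AmpOp r) 1 1"
| "has_sort RegOp 1 1"
| "has_sort AddOp 1 2"
| "has_sort ZeroOp 1 0"
| "has_sort OneOp 1 0"
| "has_sort Id0 0 0"
| "has_sort Id1 1 1"
| "has_sort Sw 2 2"
| "has_sort c n m \<Longrightarrow> has_sort d m l \<Longrightarrow> has_sort (Seq c d) n l"
| "has_sort c n m \<Longrightarrow> has_sort d n' m' \<Longrightarrow> has_sort (Par c d) (n + n') (m + m')"

type_synonym 'k ratfun = "'k poly fract"

definition xvar :: "'k::field ratfun" where
  "xvar = Fract [:0, 1:] 1"

definition const :: "'k::field \<Rightarrow> 'k ratfun" where
  "const r = Fract [:r:] 1"

fun sem :: "'k::field circ \<Rightarrow> ('k ratfun list \<times> 'k ratfun list) set" where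
  "sem Copy = {([p], [p, p]) | p. True}"
| "sem Disc = {([p], []) | p. True}"
| "sem (Amp r) = {([p], [const r * p]) | p. True}"
| "sem Reg = {([p], [p * xvar]) | p. True}"
| "sem Add = {([p, q], [p + q]) | p q. True}"
| "sem Zero = {([], [0])}"
| "sem One = {([], [1])}"
| "sem CopyOp = {([p, p], [p]) | p. True}"
| "sem DiscOp = {([], [p]) | p. True}"
| "sem (AmpOp r) = {([const r * p], [p]) | p. True}"
| "sem RegOp = {([p * xvar], [p]) | p. True}"
| "sem AddOp = {([p + q], [p, q]) | p q. True}"
| "sem ZeroOp = {([0], [])}"
| "sem OneOp = {([1], [])}"
| "sem Id0 = {([], [])}"
| "sem Id1 = {([p], [p]) | p. True}"
| "sem Sw = {([p, q], [q, p]) | p q. True}"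
| "sem (Seq c d) = sem c O sem d"
| "sem (Par c d) = {(a @ a', b @ b') | a b a' b'. (a, b) \<in> sem c \<and> (a', b') \<in> sem d}"

fun count_one :: "'k circ \<Rightarrow> nat" where
  "count_one One = 1"
| "count_one (Seq c d) = count_one c + count_one d"
| "count_one (Par c d) = count_one c + count_one d"
| "count_one _ = 0"

fun count_one_op :: "'k circ \<Rightarrow> nat" where
  "count_one_op OneOp = 1"
| "count_one_op (Seq c d) = count_one_op c + count_one_op d"
| "count_one_op (Par c d) = count_one_op c + count_one_op d"
| "count_one_op _ = 0"

end

theory Submission
  imports Defs
begin

fun ain :: "'k circ \<Rightarrow> nat" and aout :: "'k circ \<Rightarrow> nat" where
  "ain Copy = 1" | "ain Disc = 1" | "ain (Amp r) = 1" | "ain Reg = 1" | "ain Add = 2"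
| "ain Zero = 0" | "ain One = 0" | "ain CopyOp = 2" | "ain DiscOp = 0" | "ain (AmpOp r) = 1"
| "ain RegOp = 1" | "ain AddOp = 1" | "ain ZeroOp = 1" | "ain OneOp = 1" | "ain Id0 = 0"
| "ain Id1 = 1" | "ain Sw = 2" | "ain (Seq c d) = ain c" | "ain (Par c d) = ain c + ain d"
| "aout Copy = 2" | "aout Disc = 0" | "aout (Amp r) = 1" | "aout Reg = 1" | "aout Add = 1"
| "aout Zero = 1" | "aout One = 1" | "aout CopyOp = 1" | "aout DiscOp = 1" | "aout (AmpOp r) = 1"
| "aout RegOp = 1" | "aout AddOp = 2" | "aout ZeroOp = 0" | "aout OneOp = 0" | "aout Id0 = 0"
| "aout Id1 = 1" | "aout Sw = 2" | "aout (Seq c d) = aout d" | "aout (Par c d) = aout c + aout d"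

lemma sort_ar: "has_sort c n m \<Longrightarrow> ain c = n \<and> aout c = m"
  by (induction rule: has_sort.induct) auto

lemma sort_cong: "has_sort c n m \<Longrightarrow> n = n2 \<Longrightarrow> m = m2 \<Longrightarrow> has_sort c n2 m2"
  by simp

fun idw :: "nat \<Rightarrow> 'k circ" where
  "idw 0 = Id0" | "idw (Suc n) = Par Id1 (idw n)"

fun cr :: "nat \<Rightarrow> 'k circ" where
  "cr 0 = Id1" | "cr (Suc m) = Seq (Par Sw (idw m)) (Par Id1 (cr m))"

fun crb :: "nat \<Rightarrow> 'k circ" where
  "crb 0 = Id1" | "crb (Suc m) = Seq (Par Id1 (crb m)) (Par Sw (idw m))"

fun T :: "'k circ \<Rightarrow> 'k circ" where
  "T One = Copy"
| "T OneOp = CopyOp"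
| "T (Seq c d) = Seq (T c) (T d)"
| "T (Par c d) = Seq (Par (T c) (idw (ain d)))
     (Seq (Par (cr (aout c)) (idw (ain d)))
     (Seq (Par (idw (aout c)) (T d)) (Par (crb (aout c)) (idw (aout d)))))"
| "T g = Par Id1 g"

fun semk :: "'k::field ratfun \<Rightarrow> 'k circ \<Rightarrow> ('k ratfun list \<times> 'k ratfun list) set" where
  "semk k One = {([], [k])}"
| "semk k OneOp = {([k], [])}"
| "semk k (Seq c d) = semk k c O semk k d"
| "semk k (Par c d) = {(a @ a', b @ b') | a b a' b'. (a, b) \<in> semk k c \<and> (a', b') \<in> semk k d}"
| "semk k g = sem g"

lemma semk1: "semk 1 c = sem c"
  by (induction c) auto

lemmas hs = has_sort.intros[unfolded numeral_2_eq_2 One_nat_def]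

lemma par1: "has_sort g n m \<Longrightarrow> has_sort (Par Id1 g) (Suc n) (Suc m)"
  using has_sort.intros(19)[OF has_sort.intros(16)] by simp

lemma idw_sort: "has_sort (idw n) n n"
  by (induction n) (auto intro: hs par1)

lemma cr_sort: "has_sort (cr m) (Suc m) (Suc m)"
proof (induction m)
  case 0 then show ?case by (auto intro: hs)
next
  case (Suc m)
  have a: "has_sort (Par Sw (idw m :: 'a circ)) (Suc (Suc m)) (Suc (Suc m))" using has_sort.intros(19)[OF has_sort.intros(17) idw_sort[of m]] by simp
  note b = par1[OF Suc.IH]
  show ?case using has_sort.intros(18)[OF a b] by (auto elim: sort_cong)
qed

lemma crb_sort: "has_sort (crb m) (Suc m) (Suc m)"
proof (induction m)
  case 0 then show ?case by (auto intro: hs)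
next
  case (Suc m)
  have a: "has_sort (Par Sw (idw m :: 'a circ)) (Suc (Suc m)) (Suc (Suc m))" using has_sort.intros(19)[OF has_sort.intros(17) idw_sort[of m]] by simp
  note b = par1[OF Suc.IH]
  show ?case using has_sort.intros(18)[OF b a] by (auto elim: sort_cong)
qed

lemma T_sort: "has_sort c n m \<Longrightarrow> has_sort (T c) (Suc n) (Suc m)"
proof (induction rule: has_sort.induct)
  case (19 c n m d n' m')
  have ar: "ain d = n'" "aout c = m" "aout d = m'" using sort_ar 19 by auto
  have s1: "has_sort (Par (T c) (idw n')) (Suc n + n') (Suc m + n')"
    by (intro has_sort.intros 19 idw_sort)
  have s2: "has_sort (Par (cr m) (idw n')) (Suc m + n') (Suc m + n')"
    by (intro has_sort.intros cr_sort idw_sort)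
  have s3: "has_sort (Par (idw m) (T d)) (Suc m + n') (Suc m + m')"
    using has_sort.intros(19)[OF idw_sort[of m] 19(4)] by (auto elim: sort_cong)
  have s4: "has_sort (Par (crb m) (idw m')) (Suc m + m') (Suc m + m')"
    by (intro has_sort.intros crb_sort idw_sort)
  show ?case unfolding T.simps ar
    using has_sort.intros(18)[OF s1 has_sort.intros(18)[OF s2 has_sort.intros(18)[OF s3 s4]]]
    by (auto elim: sort_cong)
qed (auto intro: hs par1 simp: numeral_3_eq_3)

lemma count_idw: "count_one (idw n) = 0" "count_one_op (idw n) = 0"
  by (induction n) auto
lemma count_cr: "count_one (cr n) = 0" "count_one_op (cr n) = 0"
  "count_one (crb n) = 0" "count_one_op (crb n) = 0"
  by (induction n) (auto simp: count_idw)
lemma count_T: "count_one (T c) = 0 \<and> count_one_op (T c) = 0"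
  by (induction c) (auto simp: count_idw count_cr)

lemma sem_len: "has_sort c n m \<Longrightarrow> (a, b) \<in> sem c \<Longrightarrow> length a = n \<and> length b = m"
  by (induction arbitrary: a b rule: has_sort.induct) fastforce+

lemma sem_par_id1: "sem (Par Id1 c) = {(p # a, p # b) | p a b. (a, b) \<in> sem c}"
  apply (rule set_eqI)
  apply (simp)
  apply (rule iffI)
   apply force
  apply (elim exE conjE)
  apply (rule_tac x="[p]" in exI)
  apply force
  done

lemma sem_idw: "sem (idw n) = {(a, a) | a. length a = n}"
proof (induction n)
  case 0 then show ?case by simp
next
  case (Suc n)
  show ?case unfolding idw.simps sem_par_id1 Suc.IH by (auto simp: length_Suc_conv)
qed

lemma sem_par_sw: "sem (Par Sw (idw m)) = {(p # q # a, q # p # a) | p q a. length a = m}"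
  apply (rule set_eqI)
  apply (simp add: sem_idw)
  apply (rule iffI)
   apply force
  apply (elim exE conjE)
  apply (rule_tac x="[p,q]" in exI)
  apply force
  done

lemma sem_cr: "sem (cr m) = {(k # b, b @ [k]) | k b. length b = m}"
proof (induction m)
  case 0 then show ?case by auto
next
  case (Suc m)
  show ?case unfolding cr.simps sem.simps(18) sem_par_sw sem_par_id1 Suc.IH
    by (auto simp: length_Suc_conv relcomp_unfold)
qed

lemma sem_crb: "sem (crb m) = {(b @ [k], k # b) | k b. length b = m}"
proof (induction m)
  case 0 then show ?case by auto
next
  case (Suc m)
  show ?case unfolding crb.simps sem.simps(18) sem_par_sw sem_par_id1 Suc.IH
    by (auto simp: length_Suc_conv relcomp_unfold)
qed

lemma semk_len: "has_sort c n m \<Longrightarrow> (a, b) \<in> semk k c \<Longrightarrow> length a = n \<and> length b = m"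
  by (induction arbitrary: a b rule: has_sort.induct) fastforce+

lemma sem_par_idw_r: "sem (Par c (idw n')) = {(a @ x, b @ x) | a b x. (a, b) \<in> sem c \<and> length x = n'}"
  by (auto simp: sem_idw)

lemma sem_par_idw_l: "sem (Par (idw n') c) = {(x @ a, x @ b) | a b x. (a, b) \<in> sem c \<and> length x = n'}"
  by (auto simp: sem_idw)

definition lift :: "('k::field ratfun \<Rightarrow> ('k ratfun list \<times> 'k ratfun list) set) \<Rightarrow> ('k ratfun list \<times> 'k ratfun list) set" where
  "lift R = {(k # a, k # b) | k a b. (a, b) \<in> R k}"

lemma T_sem: "has_sort c n m \<Longrightarrow> sem (T c) = lift (\<lambda>k. semk k c)"
proof (induction rule: has_sort.induct)
  case (18 c n m d l)
  show ?case unfolding T.simps sem.simps(18) 18 lift_def semk.simps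
    by (auto simp: relcomp_unfold)
next
  case (19 c n m d n' m')
  have hc: "has_sort c n m" and hd: "has_sort d n' m'" using 19 by blast+
  have ar: "ain d = n'" "aout c = m" "aout d = m'" using sort_ar 19 by auto
  let ?S1 = "{((k # a) @ x, (k # b) @ x) | k a b x. (a, b) \<in> semk k c \<and> length x = n'}"
  let ?S2 = "{((k # b) @ x, (b @ [k]) @ x) | k b x. length b = m \<and> length x = n'}"
  let ?S3 = "{(y @ (k # a), y @ (k # b)) | k a b y. (a, b) \<in> semk k d \<and> length y = m}"
  let ?S4 = "{((b @ [k]) @ x, (k # b) @ x) | k b x. length b = m \<and> length x = m'}"
  have e1: "sem (Par (T c) (idw n')) = ?S1"
    unfolding sem_par_idw_r 19 lift_def by blast
  have e2: "sem (Par (cr m) (idw n')) = ?S2"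
    unfolding sem_par_idw_r sem_cr by blast
  have e3: "sem (Par (idw m) (T d)) = ?S3"
    unfolding sem_par_idw_l 19 lift_def by blast
  have e4: "sem (Par (crb m) (idw m')) = ?S4"
    unfolding sem_par_idw_r sem_crb by blast
  have e: "sem (T (Par c d)) = ?S1 O (?S2 O (?S3 O ?S4))"
    unfolding T.simps ar sem.simps(18) e1 e2 e3 e4 ..
  show ?case unfolding e
  proof (intro set_eqI iffI)
    fix z assume "z \<in> ?S1 O (?S2 O (?S3 O ?S4))"
    then obtain z0 z1 z2 z3 z4 where zz: "z = (z0, z4)" "(z0, z1) \<in> ?S1" "(z1, z2) \<in> ?S2"
      "(z2, z3) \<in> ?S3" "(z3, z4) \<in> ?S4" by blast
    from zz(2) obtain k a b x where q1: "z0 = (k # a) @ x" "z1 = (k # b) @ x" "(a, b) \<in> semk k c" "length x = n'"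
      by blast
    from zz(3) obtain k2 b2 x2 where q2: "z1 = (k2 # b2) @ x2" "z2 = (b2 @ [k2]) @ x2" "length b2 = m" "length x2 = n'"
      by blast
    from zz(4) obtain k3 a3 b3 y where q3: "z2 = y @ (k3 # a3)" "z3 = y @ (k3 # b3)" "(a3, b3) \<in> semk k3 d" "length y = m"
      by blast
    from zz(5) obtain k4 b4 x4 where q4: "z3 = (b4 @ [k4]) @ x4" "z4 = (k4 # b4) @ x4" "length b4 = m" "length x4 = m'"
      by blast
    have h: "z = ((k # a) @ x, (k4 # b4) @ x4)" "(a, b) \<in> semk k c" "length x = n'"
      "(k # b) @ x = (k2 # b2) @ x2" "length b2 = m" "length x2 = n'"
      "(b2 @ [k2]) @ x2 = y @ (k3 # a3)" "(a3, b3) \<in> semk k3 d" "length y = m"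
      "y @ (k3 # b3) = (b4 @ [k4]) @ x4" "length b4 = m" "length x4 = m'"
      using zz q1 q2 q3 q4 by auto
    have lb: "length b = m" using semk_len[OF hc h(2)] by simp
    from h(4) lb h(5) have 1: "k2 = k" "b2 = b" "x2 = x" by auto
    from h(7) h(9) h(5) have 2: "y = b2" "k3 = k2" "a3 = x2" by (auto simp: append_eq_append_conv)
    from h(10) h(9) h(11) have 3: "b4 = y" "k4 = k3" "x4 = b3" by (auto simp: append_eq_append_conv)
    show "z \<in> lift (\<lambda>k. semk k (Par c d))"
      unfolding lift_def semk.simps using h 1 2 3 by fastforce
  next
    fix z assume "z \<in> lift (\<lambda>k. semk k (Par c d))"
    then obtain k a b a' b' where h: "z = (k # a @ a', k # b @ b')" "(a, b) \<in> semk k c" "(a', b') \<in> semk k d"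
      by (auto simp: lift_def)
    have l: "length a' = n'" "length b = m" "length b' = m'"
      using semk_len[OF hc h(2)] semk_len[OF hd h(3)] by auto
    have r1: "((k # a) @ a', (k # b) @ a') \<in> ?S1"
      by (rule CollectI, rule exI[of _ k], rule exI[of _ a], rule exI[of _ b], rule exI[of _ a'])
         (simp add: h l)
    have r2: "((k # b) @ a', b @ (k # a')) \<in> ?S2"
      by (rule CollectI, rule exI[of _ k], rule exI[of _ b], rule exI[of _ a'])
         (simp add: l)
    have r3: "(b @ (k # a'), b @ (k # b')) \<in> ?S3"
      by (rule CollectI, rule exI[of _ k], rule exI[of _ a'], rule exI[of _ b'], rule exI[of _ b])
         (simp add: h l)
    have r4: "(b @ (k # b'), (k # b) @ b') \<in> ?S4"
      by (rule CollectI, rule exI[of _ k], rule exI[of _ b], rule exI[of _ b'])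
         (simp add: l)
    have "((k # a) @ a', (k # b) @ b') \<in> ?S1 O (?S2 O (?S3 O ?S4))"
      by (rule relcompI[OF r1 relcompI[OF r2 relcompI[OF r3 r4]]])
    then show "z \<in> ?S1 O (?S2 O (?S3 O ?S4))" using h(1) by simp
  qed
qed (unfold T.simps sem_par_id1 semk.simps lift_def; auto)+

theorem proposition12:
  fixes c :: "'k::field circ"
  assumes "has_sort c n m"
  shows "\<exists>d :: 'k circ. has_sort d n m \<and> count_one d = 1 \<and> count_one_op d = 0
            \<and> sem d = sem c"
proof -
  let ?D = "Seq (Par One (idw n)) (Seq (T c) (Par Disc (idw m))) :: 'k circ"
  have s1: "has_sort (Par One (idw n) :: 'k circ) n (Suc n)"
    using has_sort.intros(19)[OF has_sort.intros(7) idw_sort[of n]] by (auto elim: sort_cong)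
  have s3: "has_sort (Par Disc (idw m) :: 'k circ) (Suc m) m"
    using has_sort.intros(19)[OF has_sort.intros(2) idw_sort[of m]] by (auto elim: sort_cong)
  have A: "has_sort ?D n m"
    by (rule has_sort.intros(18)[OF s1 has_sort.intros(18)[OF T_sort[OF assms] s3]])
  have B: "count_one ?D = 1" using count_T[of c] by (simp add: count_idw)
  have C: "count_one_op ?D = 0" using count_T[of c] by (simp add: count_idw)
  have st: "sem (T c) = lift (\<lambda>k. semk k c)" by (rule T_sem[OF assms])
  have p1: "sem (Par One (idw n) :: 'k circ) = {(a, 1 # a) | a. length a = n}"
    by (auto simp: sem_idw)
  have p3: "sem (Par Disc (idw m) :: 'k circ) = {(k # a, a) | k a. length a = m}"
    by (auto simp: sem_idw)
  have E: "sem ?D = sem c"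
  proof (intro set_eqI iffI)
    fix z assume "z \<in> sem ?D"
    then obtain a b where "z = (a, b)" "(a, b) \<in> semk 1 c"
      unfolding sem.simps(18) p1 p3 st lift_def by auto
    then show "z \<in> sem c" by (simp add: semk1)
  next
    fix z assume "z \<in> sem c"
    then obtain a b where z: "z = (a, b)" "(a, b) \<in> sem c" by (cases z) auto
    have l: "length a = n" "length b = m" using sem_len[OF assms z(2)] by auto
    have "(1 # a, 1 # b) \<in> lift (\<lambda>k. semk k c)" unfolding lift_def using z semk1 by auto
    moreover have "(a, 1 # a) \<in> sem (Par One (idw n) :: 'k circ)" unfolding p1 using l by simp
    moreover have "(1 # b, b) \<in> sem (Par Disc (idw m) :: 'k circ)" unfolding p3 using l by simp
    ultimately show "z \<in> sem ?D"
      unfolding sem.simps(18) st[symmetric] using z by blast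
  qed
  show ?thesis using A B C E by blast
qed

end
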